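(* Let $\epsilon=(\epsilon_n)\in(0,1]^{\mathbb{N}}$, let $x=(x_n),y=(y_n)\in\hat{\mathbb{C}}^{\mathbb{N}}$ be sequences of points of the Riemann sphere, regarded as points of $\mathbb{P}^1(A^\epsilon)$, and let $\omega\in\beta\mathbb{N}$. Then \[\lim_\omega d_{\mathbb{P}^1(\mathbb{C})}(x_n,y_n)^{\epsilon_n}=\lim_\omega d_{\mathbb{P}^1(\mathbb{C}_{\epsilon_n})}(s_{\epsilon_n}^{-1}x_n,s_{\epsilon_n}^{-1}y_n)=d_{\mathbb{P}^1(\mathscr{H}(\omega))}(x_\omega,y_\omega).\]
   Context: $A^\epsilon=\{(x_n)\in\mathbb{C}^{\mathbb{N}}:\sup_n|x_n|^{\epsilon_n}<\infty\}$ with norm $\sup_n|x_n|^{\epsilon_n}$; $\beta\mathbb{N}$ the ultrafilters on $\mathbb{N}$; $\mathscr{H}(\omega)$ the completion of $A^\epsilon/\{x:\lim_\omega|x_n|^{\epsilon_n}=0\}$ with norm $|x|_\omega=\lim_\omega|x_n|^{\epsilon_n}$. A sequence $(x_n)$ in $\hat{\mathbb{C}}$ defines a point of $\mathbb{P}^1(A^\epsilon)$: write $x_n=[z_{0,n}\colon z_{1,n}]$ with $\max(|z_{0,n}|,|z_{1,n}|)=1$, and take $[z_0\colon z_1]$ with $z_i=(z_{i,n})\in A^\epsilon$ (this gives a bijection $\hat{\mathbb{C}}^{\mathbb{N}}\to\mathbb{P}^1(A^\epsilon)$); $x_\omega\in\mathbb{P}^1(\mathscr{H}(\omega))$ is its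 image $[z_{0,\omega}\colon z_{1,\omega}]$. $\mathbb{C}_e=(\mathbb{C},|\cdot|^e)$, and $s_e\colon\mathbb{P}^{1,an}_{\mathbb{C}_e}\to\hat{\mathbb{C}}$ is the homeomorphism sending a seminorm to its $1/e$-th power (restricting to the identity of $\mathbb{P}^1(\mathbb{C})$ on rigid points). Spherical distances: on $\mathbb{P}^1(k)$ with $k$ Archimedean isometric to $\mathbb{C}_e$ (norm $|\cdot|_k$), $d([z_0\colon z_1],[w_0\colon w_1])=\frac{|z_0w_1-z_1w_0|_k}{(|z_0|_k^{2/e}+|z_1|_k^{2/e})^{e/2}(|w_0|_k^{2/e}+|w_1|_k^{2/e})^{e/2}}$ (for $e=1$ this is the standard chordal metric $d_{\mathbb{P}^1(\mathbb{C})}$); for $k$ non-Archimedean, $d=\frac{|z_0w_1-z_1w_0|}{\max\{|z_0|,|z_1|\}\max\{|w_0|,|w_1|\}}$. *)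

theory Defs
  imports "HOL-Analysis.Analysis"
begin

definition is_ultrafilter :: "nat filter \<Rightarrow> bool" where
  "is_ultrafilter \<omega> \<longleftrightarrow> \<omega> \<noteq> bot \<and>
     (\<forall>P. eventually P \<omega> \<or> eventually (\<lambda>n. \<not> P n) \<omega>)"

definition Aeps :: "(nat \<Rightarrow> real) \<Rightarrow> (nat \<Rightarrow> complex) set" where
  "Aeps \<epsilon> = {a. bdd_above (range (\<lambda>n. cmod (a n) powr \<epsilon> n))}"

definition Aeps_norm :: "(nat \<Rightarrow> real) \<Rightarrow> (nat \<Rightarrow> complex) \<Rightarrow> real" where
  "Aeps_norm \<epsilon> a = (SUP n. cmod (a n) powr \<epsilon> n)"

definition om_norm :: "(nat \<Rightarrow> real) \<Rightarrow> nat filter \<Rightarrow> (nat \<Rightarrow> complex) \<Rightarrow> real" where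
  "om_norm \<epsilon> \<omega> a = Lim \<omega> (\<lambda>n. cmod (a n) powr \<epsilon> n)"

text \<open>Cauchy sequences (indexed by k) of elements of A^eps for the seminorm |.|_omega;
  the completion of the quotient by the kernel is the set of such sequences modulo
  sequences tending to 0 for |.|_omega.\<close>
definition Hcauchy :: "(nat \<Rightarrow> real) \<Rightarrow> nat filter \<Rightarrow> (nat \<Rightarrow> nat \<Rightarrow> complex) set" where
  "Hcauchy \<epsilon> \<omega> = {s. (\<forall>k. s k \<in> Aeps \<epsilon>) \<and>
     (\<forall>r>0. \<exists>N. \<forall>k\<ge>N. \<forall>l\<ge>N. om_norm \<epsilon> \<omega> (\<lambda>n. s k n - s l n) < r)}"

definition Hrel :: "(nat \<Rightarrow> real) \<Rightarrow> nat filter \<Rightarrow>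
    ((nat \<Rightarrow> nat \<Rightarrow> complex) \<times> (nat \<Rightarrow> nat \<Rightarrow> complex)) set" where
  "Hrel \<epsilon> \<omega> = {(s, t). s \<in> Hcauchy \<epsilon> \<omega> \<and> t \<in> Hcauchy \<epsilon> \<omega> \<and>
     (\<lambda>k. om_norm \<epsilon> \<omega> (\<lambda>n. s k n - t k n)) \<longlonglongrightarrow> 0}"

type_synonym Helt = "(nat \<Rightarrow> nat \<Rightarrow> complex) set"

definition Hcarrier :: "(nat \<Rightarrow> real) \<Rightarrow> nat filter \<Rightarrow> Helt set" where
  "Hcarrier \<epsilon> \<omega> = Hcauchy \<epsilon> \<omega> // Hrel \<epsilon> \<omega>"

definition Hclass :: "(nat \<Rightarrow> real) \<Rightarrow> nat filter \<Rightarrow> (nat \<Rightarrow> nat \<Rightarrow> complex) \<Rightarrow> Helt" where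
  "Hclass \<epsilon> \<omega> s = Hrel \<epsilon> \<omega> `` {s}"

definition Hrep :: "Helt \<Rightarrow> (nat \<Rightarrow> nat \<Rightarrow> complex)" where
  "Hrep X = (SOME s. s \<in> X)"

definition Hadd :: "(nat \<Rightarrow> real) \<Rightarrow> nat filter \<Rightarrow> Helt \<Rightarrow> Helt \<Rightarrow> Helt" where
  "Hadd \<epsilon> \<omega> X Y = Hclass \<epsilon> \<omega> (\<lambda>k n. Hrep X k n + Hrep Y k n)"

definition Hsub :: "(nat \<Rightarrow> real) \<Rightarrow> nat filter \<Rightarrow> Helt \<Rightarrow> Helt \<Rightarrow> Helt" where
  "Hsub \<epsilon> \<omega> X Y = Hclass \<epsilon> \<omega> (\<lambda>k n. Hrep X k n - Hrep Y k n)"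

definition Hmul :: "(nat \<Rightarrow> real) \<Rightarrow> nat filter \<Rightarrow> Helt \<Rightarrow> Helt \<Rightarrow> Helt" where
  "Hmul \<epsilon> \<omega> X Y = Hclass \<epsilon> \<omega> (\<lambda>k n. Hrep X k n * Hrep Y k n)"

definition Hemb :: "(nat \<Rightarrow> real) \<Rightarrow> nat filter \<Rightarrow> (nat \<Rightarrow> complex) \<Rightarrow> Helt" where
  "Hemb \<epsilon> \<omega> a = Hclass \<epsilon> \<omega> (\<lambda>k. a)"

definition Hone :: "(nat \<Rightarrow> real) \<Rightarrow> nat filter \<Rightarrow> Helt" where
  "Hone \<epsilon> \<omega> = Hemb \<epsilon> \<omega> (\<lambda>n. 1)"

definition Hnorm :: "(nat \<Rightarrow> real) \<Rightarrow> nat filter \<Rightarrow> Helt \<Rightarrow> real" where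
  "Hnorm \<epsilon> \<omega> X = lim (\<lambda>k. om_norm \<epsilon> \<omega> (Hrep X k))"

definition H_nonarch :: "(nat \<Rightarrow> real) \<Rightarrow> nat filter \<Rightarrow> bool" where
  "H_nonarch \<epsilon> \<omega> \<longleftrightarrow> (\<forall>X\<in>Hcarrier \<epsilon> \<omega>. \<forall>Y\<in>Hcarrier \<epsilon> \<omega>.
      Hnorm \<epsilon> \<omega> (Hadd \<epsilon> \<omega> X Y) \<le> max (Hnorm \<epsilon> \<omega> X) (Hnorm \<epsilon> \<omega> Y))"

definition H_isometric_Ce :: "(nat \<Rightarrow> real) \<Rightarrow> nat filter \<Rightarrow> real \<Rightarrow> bool" where
  "H_isometric_Ce \<epsilon> \<omega> e \<longleftrightarrow> (\<exists>\<phi>. bij_betw \<phi> UNIV (Hcarrier \<epsilon> \<omega>) \<and>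
      (\<forall>a b. \<phi> (a + b) = Hadd \<epsilon> \<omega> (\<phi> a) (\<phi> b)) \<and>
      (\<forall>a b. \<phi> (a * b) = Hmul \<epsilon> \<omega> (\<phi> a) (\<phi> b)) \<and>
      \<phi> 1 = Hone \<epsilon> \<omega> \<and>
      (\<forall>z. Hnorm \<epsilon> \<omega> (\<phi> z) = cmod z powr e))"

text \<open>Archimedean spherical distance on P^1(k), k isometric to C_e, expressed via the
  norm values |z0 w1 - z1 w0|_k, |z0|_k, |z1|_k, |w0|_k, |w1|_k.\<close>
definition sph_arch :: "real \<Rightarrow> real \<Rightarrow> real \<Rightarrow> real \<Rightarrow> real \<Rightarrow> real \<Rightarrow> real" where
  "sph_arch e nD nz0 nz1 nw0 nw1 =
     nD / ((nz0 powr (2/e) + nz1 powr (2/e)) powr (e/2) *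
           (nw0 powr (2/e) + nw1 powr (2/e)) powr (e/2))"

definition sph_nonarch :: "real \<Rightarrow> real \<Rightarrow> real \<Rightarrow> real \<Rightarrow> real \<Rightarrow> real" where
  "sph_nonarch nD nz0 nz1 nw0 nw1 = nD / (max nz0 nz1 * max nw0 nw1)"

definition dist_P1_Ce :: "real \<Rightarrow> complex \<times> complex \<Rightarrow> complex \<times> complex \<Rightarrow> real" where
  "dist_P1_Ce e z w = (let nrm = (\<lambda>c. cmod c powr e) in
     sph_arch e (nrm (fst z * snd w - snd z * fst w))
       (nrm (fst z)) (nrm (snd z)) (nrm (fst w)) (nrm (snd w)))"

text \<open>the standard chordal metric on P^1(C) = Riemann sphere (the case e = 1)\<close>
definition dist_P1_C :: "complex \<times> complex \<Rightarrow> complex \<times> complex \<Rightarrow> real" where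
  "dist_P1_C z w = dist_P1_Ce 1 z w"

definition dist_P1_H :: "(nat \<Rightarrow> real) \<Rightarrow> nat filter \<Rightarrow> Helt \<times> Helt \<Rightarrow> Helt \<times> Helt \<Rightarrow> real" where
  "dist_P1_H \<epsilon> \<omega> z w = (let nrm = Hnorm \<epsilon> \<omega>;
      D = Hsub \<epsilon> \<omega> (Hmul \<epsilon> \<omega> (fst z) (snd w)) (Hmul \<epsilon> \<omega> (snd z) (fst w)) in
     if H_nonarch \<epsilon> \<omega>
     then sph_nonarch (nrm D) (nrm (fst z)) (nrm (snd z)) (nrm (fst w)) (nrm (snd w))
     else sph_arch (SOME e. e > 0 \<and> H_isometric_Ce \<epsilon> \<omega> e)
            (nrm D) (nrm (fst z)) (nrm (snd z)) (nrm (fst w)) (nrm (snd w)))"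

text \<open>x_omega: image in P^1(H(omega)) of the point [z0:z1] of P^1(A^eps) given by a sequence
  of normalized homogeneous coordinates x n = (z0_n, z1_n), max(|z0_n|,|z1_n|) = 1.\<close>
definition pt_omega :: "(nat \<Rightarrow> real) \<Rightarrow> nat filter \<Rightarrow> (nat \<Rightarrow> complex \<times> complex) \<Rightarrow> Helt \<times> Helt" where
  "pt_omega \<epsilon> \<omega> x = (Hemb \<epsilon> \<omega> (\<lambda>n. fst (x n)), Hemb \<epsilon> \<omega> (\<lambda>n. snd (x n)))"

end

theory Submission
  imports Defs
begin

lemma ultra_nbot: "is_ultrafilter \<omega> \<Longrightarrow> \<omega> \<noteq> bot"
  unfolding is_ultrafilter_def by blast

lemma ultra_conv:
  fixes f :: "nat \<Rightarrow> 'a::{heine_borel,real_normed_vector}"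
  assumes u: "is_ultrafilter \<omega>" and b: "eventually (\<lambda>n. norm (f n) \<le> M) \<omega>"
  shows "\<exists>l. (f \<longlongrightarrow> l) \<omega>"
proof -
  have nb: "\<omega> \<noteq> bot" using u unfolding is_ultrafilter_def by blast
  have c: "compact (cball 0 M :: 'a set)" by simp
  have "filtermap f \<omega> \<noteq> bot" using nb by (simp add: filtermap_bot_iff)
  moreover have "eventually (\<lambda>x. x \<in> cball 0 M) (filtermap f \<omega>)"
    using b by (simp add: eventually_filtermap)
  ultimately obtain l where l: "inf (nhds l) (filtermap f \<omega>) \<noteq> bot"
    using c unfolding compact_filter by blast
  have "(f \<longlongrightarrow> l) \<omega>"
  proof (rule topological_tendstoI)
    fix S assume S: "open S" "l \<in> S"
    show "eventually (\<lambda>n. f n \<in> S) \<omega>"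
    proof (rule ccontr)
      assume "\<not> eventually (\<lambda>n. f n \<in> S) \<omega>"
      then have "eventually (\<lambda>n. f n \<notin> S) \<omega>" using u unfolding is_ultrafilter_def by blast
      then have 1: "eventually (\<lambda>x. x \<notin> S) (filtermap f \<omega>)" by (simp add: eventually_filtermap)
      have 2: "eventually (\<lambda>x. x \<in> S) (nhds l)" using S by (rule eventually_nhds_in_open)
      have "eventually (\<lambda>x. False) (inf (nhds l) (filtermap f \<omega>))"
        unfolding eventually_inf using 1 2 by blast
      then show False using l by (simp add: eventually_False)
    qed
  qed
  then show ?thesis by blast
qed

lemma powr_le_max1:
  fixes r e :: real
  assumes "0 \<le> r" "0 < e" "e \<le> 1"
  shows "r powr e \<le> max 1 r"
proof (cases "r \<le> 1")
  case True
  then have "r powr e \<le> 1 powr e" using assms by (intro powr_mono2) auto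
  then have "r powr e \<le> 1" by simp
  then show ?thesis by simp
next
  case False
  then have "r powr e \<le> r powr 1" using assms by (intro powr_mono) auto
  then show ?thesis using False by simp
qed

lemma powr_add_le:
  fixes x y e :: real
  assumes x: "0 \<le> x" and y: "0 \<le> y" and e: "0 < e" "e \<le> 1"
  shows "(x + y) powr e \<le> x powr e + y powr e"
proof (cases "x + y = 0")
  case True
  then show ?thesis using x y by simp
next
  case False
  define s where "s = x + y"
  have s: "s > 0" using False x y s_def by simp
  have a: "x / s \<le> (x / s) powr e"
  proof -
    have "x / s \<le> 1" using s x y s_def by simp
    then have "(x/s) powr 1 \<le> (x/s) powr e"
      using e x s by (intro powr_mono') auto
    then show ?thesis using x s by simp
  qed
  have b: "y / s \<le> (y / s) powr e"
  proof -
    have "y / s \<le> 1" using s x y s_def by simp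
    then have "(y/s) powr 1 \<le> (y/s) powr e"
      using e y s by (intro powr_mono') auto
    then show ?thesis using y s by simp
  qed
  have "x / s + y / s = 1" using s s_def by (simp add: add_divide_distrib[symmetric])
  then have "1 \<le> (x / s) powr e + (y / s) powr e"
    using a b by linarith
  then have "s powr e * 1 \<le> s powr e * ((x / s) powr e + (y / s) powr e)"
    by (intro mult_left_mono) auto
  also have "\<dots> = x powr e + y powr e"
    using s x y by (simp add: distrib_left powr_divide)
  finally show ?thesis by (simp add: s_def)
qed

locale S =
  fixes \<epsilon> :: "nat \<Rightarrow> real" and \<omega> :: "nat filter"
  assumes epos: "\<And>n. 0 < \<epsilon> n" and ele1: "\<And>n. \<epsilon> n \<le> 1"
    and ultra: "is_ultrafilter \<omega>"
begin

abbreviation om where "om \<equiv> om_norm \<epsilon> \<omega>"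

lemma nb: "\<omega> \<noteq> bot" using ultra by (rule ultra_nbot)

lemma Aeps_iff: "a \<in> Aeps \<epsilon> \<longleftrightarrow> (\<exists>M. \<forall>n. cmod (a n) powr \<epsilon> n \<le> M)"
  unfolding Aeps_def bdd_above_def by auto

lemma Aeps_bound: assumes "\<And>n. cmod (a n) \<le> B" shows "a \<in> Aeps \<epsilon>"
proof -
  have "cmod (a n) powr \<epsilon> n \<le> max 1 B" for n
  proof -
    have "cmod (a n) powr \<epsilon> n \<le> max 1 (cmod (a n))"
      using epos ele1 by (intro powr_le_max1) auto
    also have "\<dots> \<le> max 1 B" using assms by (intro max.mono) auto
    finally show ?thesis .
  qed
  then show ?thesis unfolding Aeps_iff by blast
qed

lemma Aeps_add: assumes "a \<in> Aeps \<epsilon>" "b \<in> Aeps \<epsilon>" shows "(\<lambda>n. a n + b n) \<in> Aeps \<epsilon>"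
proof -
  obtain Ma Mb where Ma: "\<And>n. cmod (a n) powr \<epsilon> n \<le> Ma" and Mb: "\<And>n. cmod (b n) powr \<epsilon> n \<le> Mb"
    using assms unfolding Aeps_iff by blast
  have "cmod (a n + b n) powr \<epsilon> n \<le> Ma + Mb" for n
  proof -
    have "cmod (a n + b n) powr \<epsilon> n \<le> (cmod (a n) + cmod (b n)) powr \<epsilon> n"
      using epos by (intro powr_mono2 norm_triangle_ineq) (auto simp: less_imp_le)
    also have "\<dots> \<le> cmod (a n) powr \<epsilon> n + cmod (b n) powr \<epsilon> n"
      using epos ele1 by (intro powr_add_le) auto
    also have "\<dots> \<le> Ma + Mb" using Ma Mb by (intro add_mono)
    finally show ?thesis .
  qed
  then show ?thesis unfolding Aeps_iff by blast
qed

lemma Aeps_diff: assumes "a \<in> Aeps \<epsilon>" "b \<in> Aeps \<epsilon>" shows "(\<lambda>n. a n - b n) \<in> Aeps \<epsilon>"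
proof -
  obtain Ma Mb where Ma: "\<And>n. cmod (a n) powr \<epsilon> n \<le> Ma" and Mb: "\<And>n. cmod (b n) powr \<epsilon> n \<le> Mb"
    using assms unfolding Aeps_iff by blast
  have "cmod (a n - b n) powr \<epsilon> n \<le> Ma + Mb" for n
  proof -
    have "cmod (a n - b n) powr \<epsilon> n \<le> (cmod (a n) + cmod (b n)) powr \<epsilon> n"
      using epos by (intro powr_mono2 norm_triangle_ineq4) (auto simp: less_imp_le)
    also have "\<dots> \<le> cmod (a n) powr \<epsilon> n + cmod (b n) powr \<epsilon> n"
      using epos ele1 by (intro powr_add_le) auto
    also have "\<dots> \<le> Ma + Mb" using Ma Mb by (intro add_mono)
    finally show ?thesis .
  qed
  then show ?thesis unfolding Aeps_iff by blast
qed

lemma Aeps_mult: assumes "a \<in> Aeps \<epsilon>" "b \<in> Aeps \<epsilon>" shows "(\<lambda>n. a n * b n) \<in> Aeps \<epsilon>"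
proof -
  obtain Ma Mb where Ma: "\<And>n. cmod (a n) powr \<epsilon> n \<le> Ma" and Mb: "\<And>n. cmod (b n) powr \<epsilon> n \<le> Mb"
    using assms unfolding Aeps_iff by blast
  have "cmod (a n * b n) powr \<epsilon> n \<le> Ma * Mb" for n
  proof -
    have "cmod (a n * b n) powr \<epsilon> n = cmod (a n) powr \<epsilon> n * cmod (b n) powr \<epsilon> n"
      by (simp add: norm_mult powr_mult)
    also have "\<dots> \<le> Ma * Mb" using Ma Mb order_trans[OF powr_ge_zero Ma] by (intro mult_mono) auto
    finally show ?thesis .
  qed
  then show ?thesis unfolding Aeps_iff by blast
qed

lemma Aeps_const: "(\<lambda>n. c) \<in> Aeps \<epsilon>"
  by (rule Aeps_bound[of _ "cmod c"]) simp

lemma om_tendsto: assumes "a \<in> Aeps \<epsilon>"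
  shows "((\<lambda>n. cmod (a n) powr \<epsilon> n) \<longlongrightarrow> om a) \<omega>"
proof -
  obtain M where M: "\<And>n. cmod (a n) powr \<epsilon> n \<le> M" using assms unfolding Aeps_iff by blast
  have "eventually (\<lambda>n. norm (cmod (a n) powr \<epsilon> n) \<le> M) \<omega>" using M by simp
  then obtain l where l: "((\<lambda>n. cmod (a n) powr \<epsilon> n) \<longlongrightarrow> l) \<omega>"
    using ultra_conv[OF ultra, of "\<lambda>n. cmod (a n) powr \<epsilon> n" M] by blast
  then have "om a = l" unfolding om_norm_def using nb by (rule tendsto_Lim[rotated])
  then show ?thesis using l by simp
qed

lemma om_eq: assumes "((\<lambda>n. cmod (a n) powr \<epsilon> n) \<longlongrightarrow> l) \<omega>" shows "om a = l"
  unfolding om_norm_def using nb assms by (rule tendsto_Lim)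

lemma om_nonneg: assumes "a \<in> Aeps \<epsilon>" shows "0 \<le> om a"
  by (rule tendsto_lowerbound[OF om_tendsto[OF assms] _ nb]) simp

lemma om_add_le: assumes "a \<in> Aeps \<epsilon>" "b \<in> Aeps \<epsilon>"
  shows "om (\<lambda>n. a n + b n) \<le> om a + om b"
proof (rule tendsto_le[OF nb])
  show "((\<lambda>n. cmod (a n) powr \<epsilon> n + cmod (b n) powr \<epsilon> n) \<longlongrightarrow> om a + om b) \<omega>"
    using assms by (intro tendsto_add om_tendsto)
  show "((\<lambda>n. cmod (a n + b n) powr \<epsilon> n) \<longlongrightarrow> om (\<lambda>n. a n + b n)) \<omega>"
    using assms by (intro om_tendsto Aeps_add)
  have "cmod (a n + b n) powr \<epsilon> n \<le> cmod (a n) powr \<epsilon> n + cmod (b n) powr \<epsilon> n" for n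
  proof -
    have "cmod (a n + b n) powr \<epsilon> n \<le> (cmod (a n) + cmod (b n)) powr \<epsilon> n"
      using epos by (intro powr_mono2 norm_triangle_ineq) (auto simp: less_imp_le)
    also have "\<dots> \<le> cmod (a n) powr \<epsilon> n + cmod (b n) powr \<epsilon> n"
      using epos ele1 by (intro powr_add_le) auto
    finally show ?thesis .
  qed
  then show "eventually (\<lambda>n. cmod (a n + b n) powr \<epsilon> n \<le> cmod (a n) powr \<epsilon> n + cmod (b n) powr \<epsilon> n) \<omega>"
    by simp
qed

lemma om_mult: assumes "a \<in> Aeps \<epsilon>" "b \<in> Aeps \<epsilon>"
  shows "om (\<lambda>n. a n * b n) = om a * om b"
proof (rule om_eq)
  have "((\<lambda>n. cmod (a n) powr \<epsilon> n * cmod (b n) powr \<epsilon> n) \<longlongrightarrow> om a * om b) \<omega>"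
    using assms by (intro tendsto_mult om_tendsto)
  then show "((\<lambda>n. cmod (a n * b n) powr \<epsilon> n) \<longlongrightarrow> om a * om b) \<omega>"
    by (simp add: norm_mult powr_mult)
qed

lemma om_commute: "om (\<lambda>n. a n - b n) = om (\<lambda>n. b n - a n)"
proof -
  have "(\<lambda>n. cmod (a n - b n) powr \<epsilon> n) = (\<lambda>n. cmod (b n - a n) powr \<epsilon> n)"
    by (metis norm_minus_commute)
  then show ?thesis unfolding om_norm_def by simp
qed

lemma om_zero: "om (\<lambda>n. 0) = 0"
  by (rule om_eq) simp

lemma om_tri3: assumes "a \<in> Aeps \<epsilon>" "b \<in> Aeps \<epsilon>" "c \<in> Aeps \<epsilon>"
  shows "om (\<lambda>n. a n - c n) \<le> om (\<lambda>n. a n - b n) + om (\<lambda>n. b n - c n)"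
proof -
  have "om (\<lambda>n. a n - c n) = om (\<lambda>n. (a n - b n) + (b n - c n))" by simp
  also have "\<dots> \<le> om (\<lambda>n. a n - b n) + om (\<lambda>n. b n - c n)"
    using assms by (intro om_add_le Aeps_diff)
  finally show ?thesis .
qed

lemma om_absdiff: assumes "a \<in> Aeps \<epsilon>" "b \<in> Aeps \<epsilon>"
  shows "\<bar>om a - om b\<bar> \<le> om (\<lambda>n. a n - b n)"
proof -
  have z: "(\<lambda>n. 0::complex) \<in> Aeps \<epsilon>" by (rule Aeps_const)
  have 1: "om a \<le> om (\<lambda>n. a n - b n) + om b"
    using om_tri3[OF assms(1) assms(2) z] by simp
  have 2: "om b \<le> om (\<lambda>n. a n - b n) + om a"
    using om_tri3[OF assms(2) assms(1) z] om_commute[of b a] by simp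
  show ?thesis using 1 2 by linarith
qed

lemma squeeze0:
  fixes g h :: "nat \<Rightarrow> real"
  assumes "\<And>k. 0 \<le> g k" "\<And>k. g k \<le> h k" "h \<longlonglongrightarrow> 0"
  shows "g \<longlonglongrightarrow> 0"
  by (rule tendsto_sandwich[of "\<lambda>k. 0" g sequentially h]) (use assms in auto)

abbreviation HC where "HC \<equiv> Hcauchy \<epsilon> \<omega>"
abbreviation HR where "HR \<equiv> Hrel \<epsilon> \<omega>"

lemma HC_Aeps: "s \<in> HC \<Longrightarrow> s k \<in> Aeps \<epsilon>" by (simp add: Hcauchy_def)

lemma Hrel_refl: "s \<in> HC \<Longrightarrow> (s, s) \<in> HR"
  by (simp add: Hrel_def om_zero)

lemma om_commute_fun: "(\<lambda>k. om (\<lambda>n. t k n - s k n)) = (\<lambda>k. om (\<lambda>n. s k n - t k n))"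
  by (rule ext) (rule om_commute)

lemma Hrel_sym: "(s, t) \<in> HR \<Longrightarrow> (t, s) \<in> HR"
  unfolding Hrel_def using om_commute_fun[of t s] by auto

lemma Hrel_trans: assumes "(s, t) \<in> HR" "(t, u) \<in> HR" shows "(s, u) \<in> HR"
proof -
  have c: "s \<in> HC" "t \<in> HC" "u \<in> HC" using assms unfolding Hrel_def by auto
  have l1: "(\<lambda>k. om (\<lambda>n. s k n - t k n)) \<longlonglongrightarrow> 0" and l2: "(\<lambda>k. om (\<lambda>n. t k n - u k n)) \<longlonglongrightarrow> 0"
    using assms unfolding Hrel_def by auto
  have ck: "s k \<in> Aeps \<epsilon>" "t k \<in> Aeps \<epsilon>" "u k \<in> Aeps \<epsilon>" for k using c by (auto simp: Hcauchy_def)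
  have "(\<lambda>k. om (\<lambda>n. s k n - u k n)) \<longlonglongrightarrow> 0"
  proof (rule squeeze0)
    show "0 \<le> om (\<lambda>n. s k n - u k n)" for k using ck by (intro om_nonneg Aeps_diff)
    show "om (\<lambda>n. s k n - u k n) \<le> om (\<lambda>n. s k n - t k n) + om (\<lambda>n. t k n - u k n)" for k
      using ck by (intro om_tri3)
    show "(\<lambda>k. om (\<lambda>n. s k n - t k n) + om (\<lambda>n. t k n - u k n)) \<longlonglongrightarrow> 0"
      using tendsto_add[OF l1 l2] by simp
  qed
  then show ?thesis using c unfolding Hrel_def by auto
qed

lemma HR_equiv: "equiv HC HR"
proof (rule equivI)
  show "HR \<subseteq> HC \<times> HC" unfolding Hrel_def by auto
  show "refl_on HC HR" unfolding refl_on_def using Hrel_refl by auto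
  show "sym HR" unfolding sym_def using Hrel_sym by auto
  show "trans HR" unfolding trans_def using Hrel_trans by blast
qed

lemma Hclass_eq: "(s, t) \<in> HR \<Longrightarrow> Hclass \<epsilon> \<omega> s = Hclass \<epsilon> \<omega> t"
  unfolding Hclass_def using HR_equiv by (rule equiv_class_eq)

lemma Hrep_class: assumes "s \<in> HC"
  shows "Hrep (Hclass \<epsilon> \<omega> s) \<in> HC" "(s, Hrep (Hclass \<epsilon> \<omega> s)) \<in> HR"
proof -
  have "s \<in> Hclass \<epsilon> \<omega> s" unfolding Hclass_def using HR_equiv assms by (rule equiv_class_self)
  then have "Hrep (Hclass \<epsilon> \<omega> s) \<in> Hclass \<epsilon> \<omega> s" unfolding Hrep_def using someI[of "\<lambda>x. x \<in> Hclass \<epsilon> \<omega> s" s] by blast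
  then show "(s, Hrep (Hclass \<epsilon> \<omega> s)) \<in> HR" unfolding Hclass_def by simp
  then show "Hrep (Hclass \<epsilon> \<omega> s) \<in> HC" unfolding Hrel_def by simp
qed

lemma HC_conv: assumes "s \<in> HC" shows "convergent (\<lambda>k. om (s k))"
proof -
  have "Cauchy (\<lambda>k. om (s k))"
    unfolding Cauchy_iff
  proof (intro allI impI)
    fix r :: real assume r: "r > 0"
    obtain N where N: "\<And>k l. k \<ge> N \<Longrightarrow> l \<ge> N \<Longrightarrow> om (\<lambda>n. s k n - s l n) < r"
      using assms r unfolding Hcauchy_def by blast
    have "norm (om (s k) - om (s l)) < r" if "k \<ge> N" "l \<ge> N" for k l
      using om_absdiff[OF HC_Aeps[OF assms] HC_Aeps[OF assms], of k l] N[OF that] by simp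
    then show "\<exists>M. \<forall>m\<ge>M. \<forall>n\<ge>M. norm (om (s m) - om (s n)) < r" by blast
  qed
  then show ?thesis by (rule Cauchy_convergent)
qed

lemma tendsto_close:
  fixes f g :: "nat \<Rightarrow> real"
  assumes "f \<longlonglongrightarrow> l" "(\<lambda>k. \<bar>f k - g k\<bar>) \<longlonglongrightarrow> 0"
  shows "g \<longlonglongrightarrow> l"
proof -
  have "(\<lambda>k. f k - g k) \<longlonglongrightarrow> 0" using assms(2) by (simp add: tendsto_rabs_zero_iff)
  from tendsto_diff[OF assms(1) this] show ?thesis by simp
qed

lemma Hnorm_class: assumes "s \<in> HC"
  shows "(\<lambda>k. om (s k)) \<longlonglongrightarrow> Hnorm \<epsilon> \<omega> (Hclass \<epsilon> \<omega> s)"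
proof -
  define t where "t = Hrep (Hclass \<epsilon> \<omega> s)"
  have t: "t \<in> HC" "(s, t) \<in> HR" using Hrep_class[OF assms] by (auto simp: t_def)
  have "(\<lambda>k. om (t k)) \<longlonglongrightarrow> Hnorm \<epsilon> \<omega> (Hclass \<epsilon> \<omega> s)"
    using HC_conv[OF t(1)] unfolding Hnorm_def t_def by (simp add: convergent_LIMSEQ_iff)
  moreover have "(\<lambda>k. \<bar>om (t k) - om (s k)\<bar>) \<longlonglongrightarrow> 0"
  proof (rule squeeze0)
    show "0 \<le> \<bar>om (t k) - om (s k)\<bar>" for k by simp
    show "\<bar>om (t k) - om (s k)\<bar> \<le> om (\<lambda>n. s k n - t k n)" for k
      using om_absdiff[OF HC_Aeps[OF t(1)] HC_Aeps[OF assms], of k k] om_commute[of "t k" "s k"] by simp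
    show "(\<lambda>k. om (\<lambda>n. s k n - t k n)) \<longlonglongrightarrow> 0" using t(2) unfolding Hrel_def by simp
  qed
  ultimately show ?thesis by (rule tendsto_close)
qed

lemma key_G: assumes c: "c \<in> Aeps \<epsilon>" and u: "\<And>k. u k \<in> Aeps \<epsilon>"
  and lim: "(\<lambda>k. om (\<lambda>n. u k n - c n)) \<longlonglongrightarrow> 0"
  shows "u \<in> HC" "Hclass \<epsilon> \<omega> u = Hemb \<epsilon> \<omega> c"
proof -
  show uc: "u \<in> HC" unfolding Hcauchy_def
  proof (intro CollectI conjI allI impI)
    show "u k \<in> Aeps \<epsilon>" for k by (rule u)
    fix r :: real assume r: "r > 0"
    obtain N where N: "\<And>k. k \<ge> N \<Longrightarrow> norm (om (\<lambda>n. u k n - c n) - 0) < r/2"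
      using lim[unfolded LIMSEQ_iff] r by (metis half_gt_zero)
    have "om (\<lambda>n. u k n - u l n) < r" if "k \<ge> N" "l \<ge> N" for k l
    proof -
      have "om (\<lambda>n. u k n - u l n) \<le> om (\<lambda>n. u k n - c n) + om (\<lambda>n. c n - u l n)"
        using u c by (intro om_tri3)
      also have "\<dots> = om (\<lambda>n. u k n - c n) + om (\<lambda>n. u l n - c n)" using om_commute by simp
      also have "\<dots> < r/2 + r/2" using N[OF that(1)] N[OF that(2)] by (intro add_strict_mono) auto
      finally show ?thesis by simp
    qed
    then show "\<exists>N. \<forall>k\<ge>N. \<forall>l\<ge>N. om (\<lambda>n. u k n - u l n) < r" by blast
  qed
  have cc: "(\<lambda>k. c) \<in> HC" unfolding Hcauchy_def using c by (simp add: om_zero)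
  have "(u, \<lambda>k. c) \<in> HR" unfolding Hrel_def using uc cc lim by simp
  then show "Hclass \<epsilon> \<omega> u = Hemb \<epsilon> \<omega> c" unfolding Hemb_def by (rule Hclass_eq)
qed

lemma const_HC: "c \<in> Aeps \<epsilon> \<Longrightarrow> (\<lambda>k. c) \<in> HC"
  unfolding Hcauchy_def by (simp add: om_zero)

lemma Hemb_carrier: "c \<in> Aeps \<epsilon> \<Longrightarrow> Hemb \<epsilon> \<omega> c \<in> Hcarrier \<epsilon> \<omega>"
  unfolding Hemb_def Hclass_def Hcarrier_def by (intro quotientI const_HC)

lemma Hnorm_emb: "c \<in> Aeps \<epsilon> \<Longrightarrow> Hnorm \<epsilon> \<omega> (Hemb \<epsilon> \<omega> c) = om c"
  using Hnorm_class[OF const_HC, of c] unfolding Hemb_def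
  by (metis LIMSEQ_const_iff)

lemma Hrep_emb: assumes "c \<in> Aeps \<epsilon>"
  shows "Hrep (Hemb \<epsilon> \<omega> c) \<in> HC"
    "(\<lambda>k. om (\<lambda>n. Hrep (Hemb \<epsilon> \<omega> c) k n - c n)) \<longlonglongrightarrow> 0"
proof -
  note h = Hrep_class[OF const_HC[OF assms]]
  show "Hrep (Hemb \<epsilon> \<omega> c) \<in> HC" using h(1) unfolding Hemb_def .
  have "(\<lambda>k. om (\<lambda>n. c n - Hrep (Hemb \<epsilon> \<omega> c) k n)) \<longlonglongrightarrow> 0"
    using h(2) unfolding Hemb_def Hrel_def by simp
  then show "(\<lambda>k. om (\<lambda>n. Hrep (Hemb \<epsilon> \<omega> c) k n - c n)) \<longlonglongrightarrow> 0"
    using om_commute by simp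
qed

lemma Hadd_emb: assumes a: "a \<in> Aeps \<epsilon>" and b: "b \<in> Aeps \<epsilon>"
  shows "Hadd \<epsilon> \<omega> (Hemb \<epsilon> \<omega> a) (Hemb \<epsilon> \<omega> b) = Hemb \<epsilon> \<omega> (\<lambda>n. a n + b n)"
proof -
  define s where "s = Hrep (Hemb \<epsilon> \<omega> a)"
  define t where "t = Hrep (Hemb \<epsilon> \<omega> b)"
  note sa = Hrep_emb[OF a, folded s_def] and tb = Hrep_emb[OF b, folded t_def]
  have sk: "\<And>k. s k \<in> Aeps \<epsilon>" by (rule HC_Aeps[OF sa(1)])
  have tk: "\<And>k. t k \<in> Aeps \<epsilon>" by (rule HC_Aeps[OF tb(1)])
  have "Hclass \<epsilon> \<omega> (\<lambda>k n. s k n + t k n) = Hemb \<epsilon> \<omega> (\<lambda>n. a n + b n)"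
  proof (rule key_G(2))
    show "(\<lambda>n. a n + b n) \<in> Aeps \<epsilon>" using a b by (rule Aeps_add)
    show "(\<lambda>n. s k n + t k n) \<in> Aeps \<epsilon>" for k using sk tk by (intro Aeps_add)
    show "(\<lambda>k. om (\<lambda>n. s k n + t k n - (a n + b n))) \<longlonglongrightarrow> 0"
    proof (rule squeeze0)
      show "0 \<le> om (\<lambda>n. s k n + t k n - (a n + b n))" for k
        using sk tk a b by (intro om_nonneg Aeps_diff Aeps_add)
      show "om (\<lambda>n. s k n + t k n - (a n + b n)) \<le> om (\<lambda>n. s k n - a n) + om (\<lambda>n. t k n - b n)" for k
      proof -
        have "om (\<lambda>n. s k n + t k n - (a n + b n)) = om (\<lambda>n. (s k n - a n) + (t k n - b n))"
          by (simp add: algebra_simps)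
        also have "\<dots> \<le> om (\<lambda>n. s k n - a n) + om (\<lambda>n. t k n - b n)"
          using sk tk a b by (intro om_add_le Aeps_diff)
        finally show ?thesis .
      qed
      show "(\<lambda>k. om (\<lambda>n. s k n - a n) + om (\<lambda>n. t k n - b n)) \<longlonglongrightarrow> 0"
        using tendsto_add[OF sa(2) tb(2)] by simp
    qed
  qed
  then show ?thesis unfolding Hadd_def s_def t_def .
qed

lemma Hsub_emb: assumes a: "a \<in> Aeps \<epsilon>" and b: "b \<in> Aeps \<epsilon>"
  shows "Hsub \<epsilon> \<omega> (Hemb \<epsilon> \<omega> a) (Hemb \<epsilon> \<omega> b) = Hemb \<epsilon> \<omega> (\<lambda>n. a n - b n)"
proof -
  define s where "s = Hrep (Hemb \<epsilon> \<omega> a)"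
  define t where "t = Hrep (Hemb \<epsilon> \<omega> b)"
  note sa = Hrep_emb[OF a, folded s_def] and tb = Hrep_emb[OF b, folded t_def]
  have sk: "\<And>k. s k \<in> Aeps \<epsilon>" by (rule HC_Aeps[OF sa(1)])
  have tk: "\<And>k. t k \<in> Aeps \<epsilon>" by (rule HC_Aeps[OF tb(1)])
  have "Hclass \<epsilon> \<omega> (\<lambda>k n. s k n - t k n) = Hemb \<epsilon> \<omega> (\<lambda>n. a n - b n)"
  proof (rule key_G(2))
    show "(\<lambda>n. a n - b n) \<in> Aeps \<epsilon>" using a b by (rule Aeps_diff)
    show "(\<lambda>n. s k n - t k n) \<in> Aeps \<epsilon>" for k using sk tk by (intro Aeps_diff)
    show "(\<lambda>k. om (\<lambda>n. s k n - t k n - (a n - b n))) \<longlonglongrightarrow> 0"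
    proof (rule squeeze0)
      show "0 \<le> om (\<lambda>n. s k n - t k n - (a n - b n))" for k
        using sk tk a b by (intro om_nonneg Aeps_diff)
      show "om (\<lambda>n. s k n - t k n - (a n - b n)) \<le> om (\<lambda>n. s k n - a n) + om (\<lambda>n. b n - t k n)" for k
      proof -
        have "om (\<lambda>n. s k n - t k n - (a n - b n)) = om (\<lambda>n. (s k n - a n) + (b n - t k n))"
          by (simp add: algebra_simps)
        also have "\<dots> \<le> om (\<lambda>n. s k n - a n) + om (\<lambda>n. b n - t k n)"
          using sk tk a b by (intro om_add_le Aeps_diff)
        finally show ?thesis .
      qed
      show "(\<lambda>k. om (\<lambda>n. s k n - a n) + om (\<lambda>n. b n - t k n)) \<longlonglongrightarrow> 0"
        using tendsto_add[OF sa(2) tb(2)] om_commute[of b] by simp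
    qed
  qed
  then show ?thesis unfolding Hsub_def s_def t_def .
qed

lemma Hmul_emb: assumes a: "a \<in> Aeps \<epsilon>" and b: "b \<in> Aeps \<epsilon>"
  shows "Hmul \<epsilon> \<omega> (Hemb \<epsilon> \<omega> a) (Hemb \<epsilon> \<omega> b) = Hemb \<epsilon> \<omega> (\<lambda>n. a n * b n)"
proof -
  define s where "s = Hrep (Hemb \<epsilon> \<omega> a)"
  define t where "t = Hrep (Hemb \<epsilon> \<omega> b)"
  note sa = Hrep_emb[OF a, folded s_def] and tb = Hrep_emb[OF b, folded t_def]
  have sk: "\<And>k. s k \<in> Aeps \<epsilon>" by (rule HC_Aeps[OF sa(1)])
  have tk: "\<And>k. t k \<in> Aeps \<epsilon>" by (rule HC_Aeps[OF tb(1)])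
  have tnorm: "(\<lambda>k. om (t k)) \<longlonglongrightarrow> om b"
  proof (rule tendsto_close[of "\<lambda>k. om b"])
    show "(\<lambda>k. \<bar>om b - om (t k)\<bar>) \<longlonglongrightarrow> 0"
    proof (rule squeeze0)
      show "\<bar>om b - om (t k)\<bar> \<le> om (\<lambda>n. t k n - b n)" for k
        using om_absdiff[OF b HC_Aeps[OF tb(1)], of k] om_commute[of b "t k"] by simp
    qed (use tb(2) in auto)
  qed simp
  have "Hclass \<epsilon> \<omega> (\<lambda>k n. s k n * t k n) = Hemb \<epsilon> \<omega> (\<lambda>n. a n * b n)"
  proof (rule key_G(2))
    show "(\<lambda>n. a n * b n) \<in> Aeps \<epsilon>" using a b by (rule Aeps_mult)
    show "(\<lambda>n. s k n * t k n) \<in> Aeps \<epsilon>" for k using sk tk by (intro Aeps_mult)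
    show "(\<lambda>k. om (\<lambda>n. s k n * t k n - a n * b n)) \<longlonglongrightarrow> 0"
    proof (rule squeeze0)
      show "0 \<le> om (\<lambda>n. s k n * t k n - a n * b n)" for k
        using sk tk a b by (intro om_nonneg Aeps_diff Aeps_mult)
      show "om (\<lambda>n. s k n * t k n - a n * b n) \<le> om (\<lambda>n. s k n - a n) * om (t k) + om a * om (\<lambda>n. t k n - b n)" for k
      proof -
        have "om (\<lambda>n. s k n * t k n - a n * b n) = om (\<lambda>n. (s k n - a n) * t k n + a n * (t k n - b n))"
          by (simp add: algebra_simps)
        also have "\<dots> \<le> om (\<lambda>n. (s k n - a n) * t k n) + om (\<lambda>n. a n * (t k n - b n))"
          using sk tk a b by (intro om_add_le Aeps_diff Aeps_mult)
        also have "\<dots> = om (\<lambda>n. s k n - a n) * om (t k) + om a * om (\<lambda>n. t k n - b n)"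
          using sk tk a b by (simp add: om_mult Aeps_diff)
        finally show ?thesis .
      qed
      show "(\<lambda>k. om (\<lambda>n. s k n - a n) * om (t k) + om a * om (\<lambda>n. t k n - b n)) \<longlonglongrightarrow> 0"
        using tendsto_add[OF tendsto_mult[OF sa(2) tnorm] tendsto_mult[OF tendsto_const[of "om a"] tb(2)]] by simp
    qed
  qed
  then show ?thesis unfolding Hmul_def s_def t_def .
qed

lemma HC_add: assumes s: "s \<in> HC" and t: "t \<in> HC" shows "(\<lambda>k n. s k n + t k n) \<in> HC"
  unfolding Hcauchy_def
proof (intro CollectI conjI allI impI)
  have sk: "\<And>k. s k \<in> Aeps \<epsilon>" by (rule HC_Aeps[OF s])
  have tk: "\<And>k. t k \<in> Aeps \<epsilon>" by (rule HC_Aeps[OF t])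
  show "(\<lambda>n. s k n + t k n) \<in> Aeps \<epsilon>" for k using sk tk by (rule Aeps_add)
  fix r :: real assume r: "r > 0"
  have hs: "\<forall>r>0. \<exists>N. \<forall>k\<ge>N. \<forall>l\<ge>N. om (\<lambda>n. s k n - s l n) < r" using s unfolding Hcauchy_def by blast
  have ht: "\<forall>r>0. \<exists>N. \<forall>k\<ge>N. \<forall>l\<ge>N. om (\<lambda>n. t k n - t l n) < r" using t unfolding Hcauchy_def by blast
  have r2: "r/2 > 0" using r by simp
  obtain N1 where N1: "\<And>k l. k \<ge> N1 \<Longrightarrow> l \<ge> N1 \<Longrightarrow> om (\<lambda>n. s k n - s l n) < r/2"
    using hs[rule_format, OF r2] by blast
  obtain N2 where N2: "\<And>k l. k \<ge> N2 \<Longrightarrow> l \<ge> N2 \<Longrightarrow> om (\<lambda>n. t k n - t l n) < r/2"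
    using ht[rule_format, OF r2] by blast
  have "om (\<lambda>n. s k n + t k n - (s l n + t l n)) < r" if "k \<ge> max N1 N2" "l \<ge> max N1 N2" for k l
  proof -
    have "om (\<lambda>n. s k n + t k n - (s l n + t l n)) = om (\<lambda>n. (s k n - s l n) + (t k n - t l n))"
      by (simp add: algebra_simps)
    also have "\<dots> \<le> om (\<lambda>n. s k n - s l n) + om (\<lambda>n. t k n - t l n)"
      using sk tk by (intro om_add_le Aeps_diff)
    also have "\<dots> < r/2 + r/2" using N1 N2 that by (intro add_strict_mono) auto
    finally show ?thesis by simp
  qed
  then show "\<exists>N. \<forall>k\<ge>N. \<forall>l\<ge>N. om (\<lambda>n. s k n + t k n - (s l n + t l n)) < r" by blast
qed

lemma carrier_class: assumes "X \<in> Hcarrier \<epsilon> \<omega>"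
  shows "Hrep X \<in> HC" "X = Hclass \<epsilon> \<omega> (Hrep X)"
proof -
  obtain s where s: "s \<in> HC" "X = Hclass \<epsilon> \<omega> s"
    using assms unfolding Hcarrier_def Hclass_def by (auto elim: quotientE)
  note h = Hrep_class[OF s(1)]
  show "Hrep X \<in> HC" using h(1) s(2) by simp
  show "X = Hclass \<epsilon> \<omega> (Hrep X)" using Hclass_eq[OF h(2)] s(2) by simp
qed

lemma powr_sum_le_max:
  fixes a b :: complex and e :: real
  assumes e: "0 < e"
  shows "cmod (a + b) powr e \<le> 2 powr e * max (cmod a powr e) (cmod b powr e)"
proof -
  have "cmod (a + b) powr e \<le> (2 * max (cmod a) (cmod b)) powr e"
  proof (rule powr_mono2)
    show "cmod (a + b) \<le> 2 * max (cmod a) (cmod b)"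
      using norm_triangle_ineq[of a b] by linarith
  qed (use e in auto)
  also have "\<dots> = 2 powr e * max (cmod a) (cmod b) powr e" by (simp add: powr_mult)
  also have "max (cmod a) (cmod b) powr e = max (cmod a powr e) (cmod b powr e)"
  proof (cases "cmod a \<le> cmod b")
    case True
    then have "cmod a powr e \<le> cmod b powr e" using e by (intro powr_mono2) auto
    then show ?thesis using True by (simp add: max_absorb2)
  next
    case False
    then have "cmod b powr e \<le> cmod a powr e" using e by (intro powr_mono2) auto
    then show ?thesis using False by (simp add: max_absorb1)
  qed
  finally show ?thesis .
qed

lemma om_add_max: assumes e0: "(\<epsilon> \<longlongrightarrow> 0) \<omega>" and a: "a \<in> Aeps \<epsilon>" and b: "b \<in> Aeps \<epsilon>"
  shows "om (\<lambda>n. a n + b n) \<le> max (om a) (om b)"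
proof (rule tendsto_le[OF nb])
  have "((\<lambda>n. 2 powr \<epsilon> n * max (cmod (a n) powr \<epsilon> n) (cmod (b n) powr \<epsilon> n)) \<longlongrightarrow>
      2 powr 0 * max (om a) (om b)) \<omega>"
    using a b e0 by (intro tendsto_mult tendsto_max om_tendsto tendsto_powr tendsto_const) auto
  then show "((\<lambda>n. 2 powr \<epsilon> n * max (cmod (a n) powr \<epsilon> n) (cmod (b n) powr \<epsilon> n)) \<longlongrightarrow>
      max (om a) (om b)) \<omega>" by simp
  show "((\<lambda>n. cmod (a n + b n) powr \<epsilon> n) \<longlongrightarrow> om (\<lambda>n. a n + b n)) \<omega>"
    using a b by (intro om_tendsto Aeps_add)
  show "eventually (\<lambda>n. cmod (a n + b n) powr \<epsilon> n \<le> 2 powr \<epsilon> n * max (cmod (a n) powr \<epsilon> n) (cmod (b n) powr \<epsilon> n)) \<omega>"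
    using epos by (intro always_eventually allI powr_sum_le_max)
qed

lemma nonarch: assumes e0: "(\<epsilon> \<longlongrightarrow> 0) \<omega>" shows "H_nonarch \<epsilon> \<omega>"
  unfolding H_nonarch_def
proof (intro ballI)
  fix X Y assume X: "X \<in> Hcarrier \<epsilon> \<omega>" and Y: "Y \<in> Hcarrier \<epsilon> \<omega>"
  define s where "s = Hrep X"
  define t where "t = Hrep Y"
  have s: "s \<in> HC" "X = Hclass \<epsilon> \<omega> s" using carrier_class[OF X] by (auto simp: s_def)
  have t: "t \<in> HC" "Y = Hclass \<epsilon> \<omega> t" using carrier_class[OF Y] by (auto simp: t_def)
  have u: "(\<lambda>k n. s k n + t k n) \<in> HC" using s t by (intro HC_add)
  have "(\<lambda>k. om (\<lambda>n. s k n + t k n)) \<longlonglongrightarrow> Hnorm \<epsilon> \<omega> (Hadd \<epsilon> \<omega> X Y)"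
    using Hnorm_class[OF u] unfolding Hadd_def s_def t_def .
  moreover have "(\<lambda>k. max (om (s k)) (om (t k))) \<longlonglongrightarrow> max (Hnorm \<epsilon> \<omega> X) (Hnorm \<epsilon> \<omega> Y)"
    using Hnorm_class[OF s(1)] Hnorm_class[OF t(1)] s(2) t(2) by (intro tendsto_max) auto
  moreover have "om (\<lambda>n. s k n + t k n) \<le> max (om (s k)) (om (t k))" for k
    using e0 HC_Aeps[OF s(1)] HC_Aeps[OF t(1)] by (rule om_add_max)
  ultimately show "Hnorm \<epsilon> \<omega> (Hadd \<epsilon> \<omega> X Y) \<le> max (Hnorm \<epsilon> \<omega> X) (Hnorm \<epsilon> \<omega> Y)"
    by (intro tendsto_le[OF trivial_limit_sequentially] always_eventually) auto
qed

lemma eps_conv: "\<exists>e. (\<epsilon> \<longlongrightarrow> e) \<omega>"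
proof -
  have "eventually (\<lambda>n. norm (\<epsilon> n) \<le> 1) \<omega>" using epos ele1
    by (intro always_eventually allI) (simp add: less_imp_le)
  then show ?thesis using ultra_conv[OF ultra, of \<epsilon> 1] by blast
qed

lemma om_const_lim: assumes e0: "(\<epsilon> \<longlongrightarrow> e0) \<omega>" "e0 > 0"
  and l: "(a \<longlongrightarrow> l) \<omega>" shows "om a = cmod l powr e0"
proof (rule om_eq)
  show "((\<lambda>n. cmod (a n) powr \<epsilon> n) \<longlongrightarrow> cmod l powr e0) \<omega>"
    using l e0 by (intro tendsto_powr' tendsto_norm) auto
qed

lemma arch_conv: assumes e0: "(\<epsilon> \<longlongrightarrow> e0) \<omega>" "e0 > 0" and a: "a \<in> Aeps \<epsilon>"
  shows "\<exists>l. (a \<longlongrightarrow> l) \<omega>"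
proof -
  obtain M where M: "\<And>n. cmod (a n) powr \<epsilon> n \<le> M" using a unfolding Aeps_iff by blast
  have M0: "0 \<le> M" using order_trans[OF powr_ge_zero M] .
  have ev: "eventually (\<lambda>n. \<epsilon> n > e0/2) \<omega>" using e0 by (intro order_tendstoD(1)) auto
  have "eventually (\<lambda>n. norm (a n) \<le> max 1 (M powr (2/e0))) \<omega>"
    using ev
  proof (rule eventually_mono)
    fix n assume en: "\<epsilon> n > e0/2"
    show "norm (a n) \<le> max 1 (M powr (2/e0))"
    proof (cases "cmod (a n) \<le> 1")
      case True then show ?thesis by simp
    next
      case False
      have "cmod (a n) = cmod (a n) powr 1" using False by simp
      also have "\<dots> \<le> cmod (a n) powr (\<epsilon> n * (2/e0))"
        using False en e0(2) by (intro powr_mono) (auto simp: field_simps)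
      also have "\<dots> = (cmod (a n) powr \<epsilon> n) powr (2/e0)" by (simp add: powr_powr)
      also have "\<dots> \<le> M powr (2/e0)" using M e0(2) by (intro powr_mono2) auto
      finally show ?thesis by simp
    qed
  qed
  then show ?thesis using ultra_conv[OF ultra] by blast
qed

lemma Hsurj: assumes e0: "(\<epsilon> \<longlongrightarrow> e0) \<omega>" "e0 > 0" and X: "X \<in> Hcarrier \<epsilon> \<omega>"
  shows "\<exists>z. X = Hemb \<epsilon> \<omega> (\<lambda>n. z)"
proof -
  define s where "s = Hrep X"
  have s: "s \<in> HC" "X = Hclass \<epsilon> \<omega> s" using carrier_class[OF X] by (auto simp: s_def)
  have sk: "\<And>k. s k \<in> Aeps \<epsilon>" by (rule HC_Aeps[OF s(1)])
  define l where "l k = Lim \<omega> (s k)" for k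
  have lk: "(s k \<longlongrightarrow> l k) \<omega>" for k
  proof -
    obtain c where "(s k \<longlongrightarrow> c) \<omega>" using arch_conv[OF e0 sk] by blast
    moreover then have "l k = c" unfolding l_def using nb by (intro tendsto_Lim)
    ultimately show ?thesis by simp
  qed
  have omd: "om (\<lambda>n. s k n - s m n) = cmod (l k - l m) powr e0" for k m
    using e0 tendsto_diff[OF lk[of k] lk[of m]] by (intro om_const_lim) auto
  have "Cauchy l" unfolding Cauchy_iff
  proof (intro allI impI)
    fix r :: real assume r: "r > 0"
    have hs: "\<forall>r>0. \<exists>N. \<forall>k\<ge>N. \<forall>l\<ge>N. om (\<lambda>n. s k n - s l n) < r" using s(1) unfolding Hcauchy_def by blast
    have r2: "r powr e0 > 0" using r by simp
    obtain N where N: "\<And>k m. k \<ge> N \<Longrightarrow> m \<ge> N \<Longrightarrow> om (\<lambda>n. s k n - s m n) < r powr e0"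
      using hs[rule_format, OF r2] by blast
    have "norm (l k - l m) < r" if "k \<ge> N" "m \<ge> N" for k m
    proof (rule ccontr)
      assume "\<not> norm (l k - l m) < r"
      then have "r powr e0 \<le> cmod (l k - l m) powr e0" using r e0(2) by (intro powr_mono2) auto
      then show False using N[OF that] omd[of k m] by simp
    qed
    then show "\<exists>M. \<forall>m\<ge>M. \<forall>n\<ge>M. norm (l m - l n) < r" by blast
  qed
  then obtain z where z: "l \<longlonglongrightarrow> z" using Cauchy_convergent_iff convergent_def by blast
  have "Hclass \<epsilon> \<omega> s = Hemb \<epsilon> \<omega> (\<lambda>n. z)"
  proof (rule key_G(2)[OF Aeps_const sk])
    have "om (\<lambda>n. s k n - z) = cmod (l k - z) powr e0" for k
      using e0 tendsto_diff[OF lk[of k] tendsto_const[of z]] by (intro om_const_lim) auto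
    moreover have "(\<lambda>k. cmod (l k - z) powr e0) \<longlonglongrightarrow> cmod (z - z) powr e0"
      using z e0(2) by (intro tendsto_powr' tendsto_norm tendsto_diff tendsto_const) auto
    ultimately show "(\<lambda>k. om (\<lambda>n. s k n - z)) \<longlonglongrightarrow> 0" by simp
  qed
  then show ?thesis using s(2) by blast
qed

lemma om_constz: assumes e0: "(\<epsilon> \<longlongrightarrow> e0) \<omega>" "e0 > 0" shows "om (\<lambda>n. z) = cmod z powr e0"
  using e0 by (intro om_const_lim) auto

lemma iso: assumes e0: "(\<epsilon> \<longlongrightarrow> e0) \<omega>" "e0 > 0" shows "H_isometric_Ce \<epsilon> \<omega> e0"
  unfolding H_isometric_Ce_def
proof (intro exI conjI allI)
  define \<phi> where "\<phi> z = Hemb \<epsilon> \<omega> (\<lambda>n. z)" for z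
  show "\<phi> (a + b) = Hadd \<epsilon> \<omega> (\<phi> a) (\<phi> b)" for a b
    unfolding \<phi>_def by (simp add: Hadd_emb Aeps_const)
  show "\<phi> (a * b) = Hmul \<epsilon> \<omega> (\<phi> a) (\<phi> b)" for a b
    unfolding \<phi>_def by (simp add: Hmul_emb Aeps_const)
  show "\<phi> 1 = Hone \<epsilon> \<omega>" unfolding \<phi>_def Hone_def ..
  show "Hnorm \<epsilon> \<omega> (\<phi> z) = cmod z powr e0" for z
    unfolding \<phi>_def using e0 by (simp add: Hnorm_emb Aeps_const om_constz)
  show "bij_betw \<phi> UNIV (Hcarrier \<epsilon> \<omega>)"
    unfolding bij_betw_def
  proof
    show "inj \<phi>"
    proof (rule injI)
      fix a b assume ab: "\<phi> a = \<phi> b"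
      have "Hsub \<epsilon> \<omega> (\<phi> a) (\<phi> a) = Hsub \<epsilon> \<omega> (\<phi> a) (\<phi> b)" using ab by simp
      then have "Hemb \<epsilon> \<omega> (\<lambda>n. a - a) = Hemb \<epsilon> \<omega> (\<lambda>n. a - b)"
        unfolding \<phi>_def by (simp add: Hsub_emb Aeps_const)
      then have "Hnorm \<epsilon> \<omega> (Hemb \<epsilon> \<omega> (\<lambda>n. a - a)) = Hnorm \<epsilon> \<omega> (Hemb \<epsilon> \<omega> (\<lambda>n. a - b))" by simp
      then have "cmod (a - a) powr e0 = cmod (a - b) powr e0"
        using e0 by (simp only: Hnorm_emb Aeps_const om_constz)
      then show "a = b" by simp
    qed
    show "range \<phi> = Hcarrier \<epsilon> \<omega>"
    proof
      show "range \<phi> \<subseteq> Hcarrier \<epsilon> \<omega>" unfolding \<phi>_def using Hemb_carrier Aeps_const by auto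
      show "Hcarrier \<epsilon> \<omega> \<subseteq> range \<phi>"
      proof
        fix X assume "X \<in> Hcarrier \<epsilon> \<omega>"
        then obtain z where "X = Hemb \<epsilon> \<omega> (\<lambda>n. z)" using Hsurj[OF e0] by blast
        then show "X \<in> range \<phi>" unfolding \<phi>_def by blast
      qed
    qed
  qed
qed

lemma Hone_two: "Hadd \<epsilon> \<omega> (Hone \<epsilon> \<omega>) (Hone \<epsilon> \<omega>) = Hemb \<epsilon> \<omega> (\<lambda>n. 2)"
  unfolding Hone_def by (simp add: Hadd_emb Aeps_const)

lemma iso_unique: assumes e0: "(\<epsilon> \<longlongrightarrow> e0) \<omega>" "e0 > 0" and e: "H_isometric_Ce \<epsilon> \<omega> e"
  shows "e = e0"
proof -
  obtain \<phi> where p: "\<forall>a b. \<phi> (a + b) = Hadd \<epsilon> \<omega> (\<phi> a) (\<phi> b)" "\<phi> 1 = Hone \<epsilon> \<omega>"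
    "\<forall>z. Hnorm \<epsilon> \<omega> (\<phi> z) = cmod z powr e"
    using e unfolding H_isometric_Ce_def by blast
  have h: "\<phi> (1 + 1) = Hadd \<epsilon> \<omega> (\<phi> 1) (\<phi> 1)" using p(1) by blast
  have "\<phi> 2 = Hemb \<epsilon> \<omega> (\<lambda>n. 2)" using h by (simp only: one_add_one p(2) Hone_two)
  then have "Hnorm \<epsilon> \<omega> (\<phi> 2) = om (\<lambda>n. 2)" by (simp add: Hnorm_emb Aeps_const)
  then have "(2::real) powr e = 2 powr e0" using p(3) om_constz[OF e0, of 2] by simp
  then show ?thesis using powr_inj[of 2 e e0] by simp
qed

lemma not_nonarch: assumes e0: "(\<epsilon> \<longlongrightarrow> e0) \<omega>" "e0 > 0" shows "\<not> H_nonarch \<epsilon> \<omega>"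
proof
  assume "H_nonarch \<epsilon> \<omega>"
  moreover have "Hone \<epsilon> \<omega> \<in> Hcarrier \<epsilon> \<omega>" unfolding Hone_def by (intro Hemb_carrier Aeps_const)
  ultimately have "Hnorm \<epsilon> \<omega> (Hadd \<epsilon> \<omega> (Hone \<epsilon> \<omega>) (Hone \<epsilon> \<omega>)) \<le> max (Hnorm \<epsilon> \<omega> (Hone \<epsilon> \<omega>)) (Hnorm \<epsilon> \<omega> (Hone \<epsilon> \<omega>))"
    unfolding H_nonarch_def by blast
  then have "(2::real) powr e0 \<le> 1"
    unfolding Hone_two using e0 by (simp add: Hone_def Hnorm_emb Aeps_const om_constz)
  moreover have "(2::real) powr e0 > 1" using e0(2) by simp
  ultimately show False by simp
qed

lemma maxone: assumes uv: "\<And>n. max (cmod (u n)) (cmod (v n)) = 1"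
  shows "max (om u) (om v) = 1"
proof -
  have bb: "cmod (u n) \<le> 1" "cmod (v n) \<le> 1" for n using uv[of n] by (auto simp: max_def split: if_splits)
  have b: "u \<in> Aeps \<epsilon>" "v \<in> Aeps \<epsilon>" using bb by (auto intro: Aeps_bound)
  have "((\<lambda>n. max (cmod (u n) powr \<epsilon> n) (cmod (v n) powr \<epsilon> n)) \<longlongrightarrow> max (om u) (om v)) \<omega>"
    using b by (intro tendsto_max om_tendsto)
  moreover have "max (cmod (u n) powr \<epsilon> n) (cmod (v n) powr \<epsilon> n) = 1" for n
  proof (cases "cmod (u n) \<le> cmod (v n)")
    case True
    then have "cmod (u n) powr \<epsilon> n \<le> cmod (v n) powr \<epsilon> n" using epos[of n] by (intro powr_mono2) auto
    moreover have "cmod (v n) = 1" using uv[of n] True by (simp add: max_def)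
    ultimately show ?thesis by (simp add: max_absorb2)
  next
    case False
    then have "cmod (v n) powr \<epsilon> n \<le> cmod (u n) powr \<epsilon> n" using epos[of n] by (intro powr_mono2) auto
    moreover have "cmod (u n) = 1" using uv[of n] False by (simp add: max_def)
    ultimately show ?thesis by (simp add: max_absorb1)
  qed
  ultimately have "((\<lambda>n. 1::real) \<longlongrightarrow> max (om u) (om v)) \<omega>" by simp
  then show ?thesis using tendsto_unique[OF nb _ tendsto_const] by metis
qed

lemma sumlemma: assumes e0: "(\<epsilon> \<longlongrightarrow> e0) \<omega>" "e0 > 0"
  and u: "\<And>n. cmod (u n) \<le> 1" and v: "\<And>n. cmod (v n) \<le> 1"
  and S: "((\<lambda>n. cmod (u n) powr 2 + cmod (v n) powr 2) \<longlongrightarrow> S0) \<omega>"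
  shows "om u powr (2/e0) + om v powr (2/e0) = S0"
proof -
  have "eventually (\<lambda>n. norm (cmod (u n)) \<le> 1) \<omega>" using u by simp
  then obtain r where r: "((\<lambda>n. cmod (u n)) \<longlongrightarrow> r) \<omega>" using ultra_conv[OF ultra, of "\<lambda>n. cmod (u n)" 1] by blast
  have "eventually (\<lambda>n. norm (cmod (v n)) \<le> 1) \<omega>" using v by simp
  then obtain q where q: "((\<lambda>n. cmod (v n)) \<longlongrightarrow> q) \<omega>" using ultra_conv[OF ultra, of "\<lambda>n. cmod (v n)" 1] by blast
  have r0: "r \<ge> 0" by (rule tendsto_lowerbound[OF r _ nb]) simp
  have q0: "q \<ge> 0" by (rule tendsto_lowerbound[OF q _ nb]) simp
  have omu: "om u = r powr e0" using r e0 by (intro om_eq tendsto_powr') auto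
  have omv: "om v = q powr e0" using q e0 by (intro om_eq tendsto_powr') auto
  have "((\<lambda>n. cmod (u n) powr 2 + cmod (v n) powr 2) \<longlongrightarrow> r powr 2 + q powr 2) \<omega>"
    using r q by (intro tendsto_add tendsto_powr') auto
  then have "S0 = r powr 2 + q powr 2" using tendsto_unique[OF nb S] by simp
  moreover have "om u powr (2/e0) = r powr 2" using omu e0(2) r0 by (simp add: powr_powr)
  moreover have "om v powr (2/e0) = q powr 2" using omv e0(2) q0 by (simp add: powr_powr)
  ultimately show ?thesis by simp
qed

lemma powr_frac:
  fixes A B C e :: real
  assumes "0 \<le> A" "0 \<le> B" "0 \<le> C"
  shows "(A / (B powr (1/2) * C powr (1/2))) powr e = A powr e / (B powr (e/2) * C powr (e/2))"
  using assms by (simp add: powr_divide powr_mult powr_powr)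

lemma main:
  fixes x y :: "nat \<Rightarrow> complex \<times> complex"
  assumes xnorm: "\<forall>n. max (cmod (fst (x n))) (cmod (snd (x n))) = 1"
    and ynorm: "\<forall>n. max (cmod (fst (y n))) (cmod (snd (y n))) = 1"
  shows "((\<lambda>n. dist_P1_C (x n) (y n) powr \<epsilon> n)
            \<longlongrightarrow> dist_P1_H \<epsilon> \<omega> (pt_omega \<epsilon> \<omega> x) (pt_omega \<epsilon> \<omega> y)) \<omega>
       \<and> ((\<lambda>n. dist_P1_Ce (\<epsilon> n) (x n) (y n))
            \<longlongrightarrow> dist_P1_H \<epsilon> \<omega> (pt_omega \<epsilon> \<omega> x) (pt_omega \<epsilon> \<omega> y)) \<omega>"
proof -
  define z0 where "z0 = (\<lambda>n. fst (x n))"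
  define z1 where "z1 = (\<lambda>n. snd (x n))"
  define w0 where "w0 = (\<lambda>n. fst (y n))"
  define w1 where "w1 = (\<lambda>n. snd (y n))"
  define D where "D = (\<lambda>n. z0 n * w1 n - z1 n * w0 n)"
  define Sx where "Sx = (\<lambda>n. cmod (z0 n) powr 2 + cmod (z1 n) powr 2)"
  define Sy where "Sy = (\<lambda>n. cmod (w0 n) powr 2 + cmod (w1 n) powr 2)"
  define g where "g = (\<lambda>n. cmod (D n) powr \<epsilon> n / (Sx n powr (\<epsilon> n / 2) * Sy n powr (\<epsilon> n / 2)))"
  have mx: "\<And>n. max (cmod (z0 n)) (cmod (z1 n)) = 1" using xnorm by (simp add: z0_def z1_def)
  have my: "\<And>n. max (cmod (w0 n)) (cmod (w1 n)) = 1" using ynorm by (simp add: w0_def w1_def)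
  have b1: "cmod (z0 n) \<le> 1" "cmod (z1 n) \<le> 1" "cmod (w0 n) \<le> 1" "cmod (w1 n) \<le> 1" for n
    using mx[of n] my[of n] by (auto simp: max_def split: if_splits)
  have Sx1: "Sx n \<ge> 1" "Sx n \<le> 2" for n
  proof -
    have "cmod (z0 n) = 1 \<or> cmod (z1 n) = 1" using mx[of n] by (auto simp: max_def split: if_splits)
    moreover have "cmod (z0 n) powr 2 \<le> 1" "cmod (z1 n) powr 2 \<le> 1"
      using b1[of n] by (auto intro!: power_le_one)
    ultimately show "Sx n \<ge> 1" "Sx n \<le> 2" unfolding Sx_def by auto
  qed
  have Sy1: "Sy n \<ge> 1" "Sy n \<le> 2" for n
  proof -
    have "cmod (w0 n) = 1 \<or> cmod (w1 n) = 1" using my[of n] by (auto simp: max_def split: if_splits)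
    moreover have "cmod (w0 n) powr 2 \<le> 1" "cmod (w1 n) powr 2 \<le> 1"
      using b1[of n] by (auto intro!: power_le_one)
    ultimately show "Sy n \<ge> 1" "Sy n \<le> 2" unfolding Sy_def by auto
  qed
  have Az: "z0 \<in> Aeps \<epsilon>" "z1 \<in> Aeps \<epsilon>" "w0 \<in> Aeps \<epsilon>" "w1 \<in> Aeps \<epsilon>"
    by (rule Aeps_bound, rule b1)+
  have AD: "D \<in> Aeps \<epsilon>"
  proof (rule Aeps_bound[of _ 2])
    fix n
    have "cmod (D n) \<le> cmod (z0 n) * cmod (w1 n) + cmod (z1 n) * cmod (w0 n)"
      unfolding D_def using norm_triangle_ineq4 by (metis norm_mult)
    also have "\<dots> \<le> 1 * 1 + 1 * 1" using b1 by (intro add_mono mult_mono) auto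
    finally show "cmod (D n) \<le> 2" by simp
  qed
  have eq1: "dist_P1_C (x n) (y n) powr \<epsilon> n = g n" for n
  proof -
    have "dist_P1_C (x n) (y n) = cmod (D n) / (Sx n powr (1/2) * Sy n powr (1/2))"
      unfolding dist_P1_C_def dist_P1_Ce_def sph_arch_def Let_def D_def Sx_def Sy_def z0_def z1_def w0_def w1_def
      by simp
    then show ?thesis unfolding g_def using Sx1[of n] Sy1[of n] by (simp add: powr_frac)
  qed
  have eq2: "dist_P1_Ce (\<epsilon> n) (x n) (y n) = g n" for n
    unfolding dist_P1_Ce_def sph_arch_def Let_def g_def D_def Sx_def Sy_def z0_def z1_def w0_def w1_def
    using epos[of n] by (simp add: powr_powr)
  obtain e0 where e0: "(\<epsilon> \<longlongrightarrow> e0) \<omega>" using eps_conv by blast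
  have e00: "e0 \<ge> 0" by (rule tendsto_lowerbound[OF e0 _ nb]) (simp add: epos less_imp_le)
  have "\<bar>Sx n\<bar> \<le> 2" for n using Sx1[of n] by (simp add: abs_le_iff)
  then have "eventually (\<lambda>n. norm (Sx n) \<le> 2) \<omega>" by simp
  then obtain Sx0 where Sx0: "(Sx \<longlongrightarrow> Sx0) \<omega>" using ultra_conv[OF ultra, of Sx 2] by blast
  have "\<bar>Sy n\<bar> \<le> 2" for n using Sy1[of n] by (simp add: abs_le_iff)
  then have "eventually (\<lambda>n. norm (Sy n) \<le> 2) \<omega>" by simp
  then obtain Sy0 where Sy0: "(Sy \<longlongrightarrow> Sy0) \<omega>" using ultra_conv[OF ultra, of Sy 2] by blast
  have Sx01: "Sx0 \<ge> 1" by (rule tendsto_lowerbound[OF Sx0 _ nb]) (simp add: Sx1)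
  have Sy01: "Sy0 \<ge> 1" by (rule tendsto_lowerbound[OF Sy0 _ nb]) (simp add: Sy1)
  define G where "G = om D / (Sx0 powr (e0/2) * Sy0 powr (e0/2))"
  have gl: "(g \<longlongrightarrow> G) \<omega>"
    unfolding g_def G_def using Sx01 Sy01
    by (intro tendsto_divide tendsto_mult tendsto_powr om_tendsto[OF AD] Sx0 Sy0 e0 tendsto_const tendsto_divide) auto
  have Hd: "Hsub \<epsilon> \<omega> (Hmul \<epsilon> \<omega> (Hemb \<epsilon> \<omega> z0) (Hemb \<epsilon> \<omega> w1)) (Hmul \<epsilon> \<omega> (Hemb \<epsilon> \<omega> z1) (Hemb \<epsilon> \<omega> w0)) = Hemb \<epsilon> \<omega> D"
    unfolding D_def using Az by (simp add: Hmul_emb Hsub_emb Aeps_mult)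
  have px: "pt_omega \<epsilon> \<omega> x = (Hemb \<epsilon> \<omega> z0, Hemb \<epsilon> \<omega> z1)" by (simp add: pt_omega_def z0_def z1_def)
  have py: "pt_omega \<epsilon> \<omega> y = (Hemb \<epsilon> \<omega> w0, Hemb \<epsilon> \<omega> w1)" by (simp add: pt_omega_def w0_def w1_def)
  have RHS: "dist_P1_H \<epsilon> \<omega> (pt_omega \<epsilon> \<omega> x) (pt_omega \<epsilon> \<omega> y) =
     (if H_nonarch \<epsilon> \<omega> then sph_nonarch (om D) (om z0) (om z1) (om w0) (om w1)
      else sph_arch (SOME e. e > 0 \<and> H_isometric_Ce \<epsilon> \<omega> e) (om D) (om z0) (om z1) (om w0) (om w1))"
    unfolding dist_P1_H_def px py Let_def fst_conv snd_conv Hd using Az AD by (simp add: Hnorm_emb)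
  have "dist_P1_H \<epsilon> \<omega> (pt_omega \<epsilon> \<omega> x) (pt_omega \<epsilon> \<omega> y) = G"
  proof (cases "e0 = 0")
    case True
    then have "H_nonarch \<epsilon> \<omega>" using e0 nonarch by simp
    moreover have "max (om z0) (om z1) = 1" using mx by (intro maxone)
    moreover have "max (om w0) (om w1) = 1" using my by (intro maxone)
    ultimately show ?thesis unfolding RHS G_def sph_nonarch_def using True Sx01 Sy01 by simp
  next
    case False
    then have ep: "e0 > 0" using e00 by simp
    have "\<exists>e. e > 0 \<and> H_isometric_Ce \<epsilon> \<omega> e" using iso[OF e0 ep] ep by blast
    then have "(SOME e. e > 0 \<and> H_isometric_Ce \<epsilon> \<omega> e) = e0"
      using iso_unique[OF e0 ep] by (metis (mono_tags, lifting) someI_ex)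
    moreover have "om z0 powr (2/e0) + om z1 powr (2/e0) = Sx0"
      using e0 ep b1 Sx0 unfolding Sx_def by (intro sumlemma) auto
    moreover have "om w0 powr (2/e0) + om w1 powr (2/e0) = Sy0"
      using e0 ep b1 Sy0 unfolding Sy_def by (intro sumlemma) auto
    ultimately show ?thesis unfolding RHS G_def sph_arch_def using not_nonarch[OF e0 ep] by simp
  qed
  then show ?thesis using gl eq1 eq2 by simp
qed

end

theorem mainTheorem8:
  fixes \<epsilon> :: "nat \<Rightarrow> real"
    and x y :: "nat \<Rightarrow> complex \<times> complex"
    and \<omega> :: "nat filter"
  assumes eps: "\<forall>n. 0 < \<epsilon> n \<and> \<epsilon> n \<le> 1"
    and xnorm: "\<forall>n. max (cmod (fst (x n))) (cmod (snd (x n))) = 1"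
    and ynorm: "\<forall>n. max (cmod (fst (y n))) (cmod (snd (y n))) = 1"
    and ultra: "is_ultrafilter \<omega>"
  shows "((\<lambda>n. dist_P1_C (x n) (y n) powr \<epsilon> n)
            \<longlongrightarrow> dist_P1_H \<epsilon> \<omega> (pt_omega \<epsilon> \<omega> x) (pt_omega \<epsilon> \<omega> y)) \<omega>
       \<and> ((\<lambda>n. dist_P1_Ce (\<epsilon> n) (x n) (y n))
            \<longlongrightarrow> dist_P1_H \<epsilon> \<omega> (pt_omega \<epsilon> \<omega> x) (pt_omega \<epsilon> \<omega> y)) \<omega>"
proof -
  interpret S \<epsilon> \<omega> using eps ultra by unfold_locales auto
  show ?thesis by (rule main[OF xnorm ynorm])
qed

end
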